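(* Let $n,T\in\mathbb{N}$. For $i=1,\dots,n$ and $t=1,\dots,T$ let $X_i(t),Y_i(t)$ be integrable real random variables, let $a_i\ge 0$ be fixed constants, and let $\beta_{\text{a}}(t)\in[0,1]$. Let $\pi_{\text{B}},\pi_{\text{in}}$ be real constants and $\pi_{\text{out}},\pi_{\text{grid}},\pi_{\text{rev}}$ constants with $\pi_{\text{grid}}\ge 0$, $\pi_{\text{rev}}\ge 0$. For $(C_{\text{a},1},\dots,C_{\text{a},n})\in[0,\infty)^n$ put $C_{\text{a}}=\sum_{i=1}^n C_{\text{a},i}$, $$P_{\text{in}}(t)=\sum_{i=1}^n\max\{a_iY_i(t)-X_i(t),0\},\qquad P_{\text{out}}(t)=\sum_{i=1}^n\min\{\max\{X_i(t)-a_iY_i(t),0\},\,C_{\text{a},i}\},$$ and $$J_{\text{a}}=\pi_{\text{B}}\sum_{i=1}^nC_{\text{a},i}+\sum_{t=1}^T\mathbb{E}\Big[\pi_{\text{in}}P_{\text{in}}(t)-\pi_{\text{out}}P_{\text{out}}(t)+\pi_{\text{grid}}\max\{P_{\text{out}}(t)-P_{\text{in}}(t)-\beta_{\text{a}}(t)C_{\text{a}},0\}+\pi_{\text{rev}}\max\{P_{\text{in}}(t)-P_{\text{out}}(t)-(1-\beta_{\text{a}}(t))C_{\text{a}},0\}\Big].$$ If $\pi_{\text{out}}\ge\pi_{\text{grid}}$, then $J_{\text{a}}$ is convex with respect to $(C_{\text{a},1},\dots,C_{\text{a},n})$.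
   Context: This is the cost of a manager who owns a joint battery of capacity $C_{\text{a}}$, allocated as daily purchase limits $C_{\text{a},i}$ to $n$ users; $a_i$ are the users' PV panel areas, $X_i(t)$ their daily consumption, $Y_i(t)$ the PV generation per unit area, $P_{\text{in}}(t)$ and $P_{\text{out}}(t)$ the total power bought from and sold to users, $\beta_{\text{a}}(t)C_{\text{a}}$ the stored power at the start of day $t$, $\pi_{\text{in}},\pi_{\text{out}}$ the buying and selling prices, $\pi_{\text{grid}}$ the price of power from the main grid, $\pi_{\text{rev}}$ the reverse-flow penalty, $\pi_{\text{B}}$ the unit storage cost. *)

theory Defs
  imports "HOL-Analysis.Analysis" "HOL-Probability.Probability"
begin

text \<open>Users are indexed by a finite type 'n (so n = CARD('n)); days by t in {1..T}.
  Allocation vector Ca :: real^'n, component Ca $ i is C_{a,i}.\<close>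

definition P_in :: "('n::finite \<Rightarrow> real) \<Rightarrow> ('n \<Rightarrow> nat \<Rightarrow> 'a \<Rightarrow> real) \<Rightarrow> ('n \<Rightarrow> nat \<Rightarrow> 'a \<Rightarrow> real) \<Rightarrow> nat \<Rightarrow> 'a \<Rightarrow> real" where
  "P_in a X Y t \<omega> = (\<Sum>i\<in>UNIV. max (a i * Y i t \<omega> - X i t \<omega>) 0)"

definition P_out :: "('n::finite \<Rightarrow> real) \<Rightarrow> ('n \<Rightarrow> nat \<Rightarrow> 'a \<Rightarrow> real) \<Rightarrow> ('n \<Rightarrow> nat \<Rightarrow> 'a \<Rightarrow> real) \<Rightarrow> real^'n \<Rightarrow> nat \<Rightarrow> 'a \<Rightarrow> real" where
  "P_out a X Y Ca t \<omega> = (\<Sum>i\<in>UNIV. min (max (X i t \<omega> - a i * Y i t \<omega>) 0) (Ca $ i))"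

definition J_a :: "'a measure \<Rightarrow> nat \<Rightarrow> ('n::finite \<Rightarrow> real) \<Rightarrow> ('n \<Rightarrow> nat \<Rightarrow> 'a \<Rightarrow> real) \<Rightarrow> ('n \<Rightarrow> nat \<Rightarrow> 'a \<Rightarrow> real)
   \<Rightarrow> (nat \<Rightarrow> real) \<Rightarrow> real \<Rightarrow> real \<Rightarrow> real \<Rightarrow> real \<Rightarrow> real \<Rightarrow> real^'n \<Rightarrow> real" where
  "J_a M T a X Y \<beta> \<pi>B \<pi>in \<pi>out \<pi>grid \<pi>rev Ca =
     \<pi>B * (\<Sum>i\<in>UNIV. Ca $ i) +
     (\<Sum>t=1..T. integral\<^sup>L M (\<lambda>\<omega>.
        \<pi>in * P_in a X Y t \<omega> - \<pi>out * P_out a X Y Ca t \<omega>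
        + \<pi>grid * max (P_out a X Y Ca t \<omega> - P_in a X Y t \<omega> - \<beta> t * (\<Sum>i\<in>UNIV. Ca $ i)) 0
        + \<pi>rev * max (P_in a X Y t \<omega> - P_out a X Y Ca t \<omega> - (1 - \<beta> t) * (\<Sum>i\<in>UNIV. Ca $ i)) 0))"

end

theory Submission
  imports Defs
begin

lemma max0_conv:
  fixes s a b :: real
  assumes "0 \<le> s" "s \<le> 1"
  shows "max ((1 - s) * a + s * b) 0 \<le> (1 - s) * max a 0 + s * max b 0"
proof -
  have "(1 - s) * a \<le> (1 - s) * max a 0" using assms by (intro mult_left_mono) auto
  moreover have "s * b \<le> s * max b 0" using assms by (intro mult_left_mono) auto
  moreover have "0 \<le> (1 - s) * max a 0" using assms by auto
  moreover have "0 \<le> s * max b 0" using assms by auto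
  ultimately show ?thesis by linarith
qed

lemma min_conc:
  fixes s D x y :: real
  assumes "0 \<le> s" "s \<le> 1"
  shows "(1 - s) * min D x + s * min D y \<le> min D ((1 - s) * x + s * y)"
proof -
  have "(1 - s) * min D x \<le> (1 - s) * D" using assms by (intro mult_left_mono) auto
  moreover have "s * min D y \<le> s * D" using assms by (intro mult_left_mono) auto
  moreover have "(1 - s) * min D x \<le> (1 - s) * x" using assms by (intro mult_left_mono) auto
  moreover have "s * min D y \<le> s * y" using assms by (intro mult_left_mono) auto
  ultimately show ?thesis by (simp add: algebra_simps)
qed

lemma F_mono:
  fixes g1 g2 K L po pg pr :: real
  assumes "g1 \<le> g2" "0 \<le> pg" "0 \<le> pr" "pg \<le> po"
  shows "- po * g2 + pg * max (g2 - K) 0 + pr * max (L - g2) 0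
       \<le> - po * g1 + pg * max (g1 - K) 0 + pr * max (L - g1) 0"
proof -
  have a: "pr * max (L - g2) 0 \<le> pr * max (L - g1) 0"
    using assms by (intro mult_left_mono) auto
  have b: "- po * g2 + pg * max (g2 - K) 0 \<le> - po * g1 + pg * max (g1 - K) 0"
  proof (cases "g2 \<le> K")
    case True
    then have "g1 \<le> K" using assms by linarith
    then show ?thesis using True assms by (simp add: mult_left_mono)
  next
    case False
    have e2: "- po * g2 + pg * max (g2 - K) 0 = -(po - pg) * g2 - pg * K"
      using False by (simp add: algebra_simps)
    have "(po - pg) * g1 \<le> (po - pg) * g2"
      using assms by (intro mult_left_mono) auto
    then have "-(po - pg) * g2 \<le> -(po - pg) * g1" by linarith
    moreover have "-(po - pg) * g1 - pg * K \<le> - po * g1 + pg * max (g1 - K) 0"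
    proof -
      have "pg * (g1 - K) \<le> pg * max (g1 - K) 0" using assms by (intro mult_left_mono) auto
      then show ?thesis by (simp add: algebra_simps)
    qed
    ultimately show ?thesis using e2 by linarith
  qed
  show ?thesis using a b by linarith
qed

theorem lemma3:
  fixes M :: "'a measure" and T :: nat
    and a :: "'n::finite \<Rightarrow> real"
    and X Y :: "'n \<Rightarrow> nat \<Rightarrow> 'a \<Rightarrow> real"
    and \<beta> :: "nat \<Rightarrow> real"
    and \<pi>B \<pi>in \<pi>out \<pi>grid \<pi>rev :: real
  assumes "prob_space M"
    and "\<And>i t. t \<in> {1..T} \<Longrightarrow> integrable M (X i t)"
    and "\<And>i t. t \<in> {1..T} \<Longrightarrow> integrable M (Y i t)"
    and "\<And>i. a i \<ge> 0"
    and "\<And>t. t \<in> {1..T} \<Longrightarrow> 0 \<le> \<beta> t \<and> \<beta> t \<le> 1"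
    and "\<pi>grid \<ge> 0" and "\<pi>rev \<ge> 0"
    and "\<pi>out \<ge> \<pi>grid"
  shows "convex_on {Ca :: real^'n. \<forall>i. Ca $ i \<ge> 0}
           (J_a M T a X Y \<beta> \<pi>B \<pi>in \<pi>out \<pi>grid \<pi>rev)"
proof -
  interpret prob_space M by fact
  define f where "f = (\<lambda>(Ca::real^'n) t \<omega>.
        \<pi>in * P_in a X Y t \<omega> - \<pi>out * P_out a X Y Ca t \<omega>
        + \<pi>grid * max (P_out a X Y Ca t \<omega> - P_in a X Y t \<omega> - \<beta> t * (\<Sum>i\<in>UNIV. Ca $ i)) 0
        + \<pi>rev * max (P_in a X Y t \<omega> - P_out a X Y Ca t \<omega> - (1 - \<beta> t) * (\<Sum>i\<in>UNIV. Ca $ i)) 0)"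
  have J: "J_a M T a X Y \<beta> \<pi>B \<pi>in \<pi>out \<pi>grid \<pi>rev Ca =
      \<pi>B * (\<Sum>i\<in>UNIV. Ca $ i) + (\<Sum>t=1..T. integral\<^sup>L M (f Ca t))" for Ca
    unfolding J_a_def f_def by simp
  have intPin: "integrable M (P_in a X Y t)" if "t \<in> {1..T}" for t
    unfolding P_in_def[abs_def] using assms(2,3) that
    by (auto intro!: integrable_sum integrable_max integrable_diff integrable_mult_right)
  have intPout: "integrable M (P_out a X Y Ca t)" if "t \<in> {1..T}" for t Ca
    unfolding P_out_def[abs_def] using assms(2,3) that
    by (auto intro!: integrable_sum integrable_max integrable_min integrable_diff integrable_mult_right)
  have intf: "integrable M (f Ca t)" if "t \<in> {1..T}" for t Ca
    unfolding f_def using intPin[OF that] intPout[OF that]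
    by (auto intro!: integrable_add integrable_diff integrable_mult_right integrable_max)
  show ?thesis
  proof (rule convex_onI)
    show "convex {Ca :: real^'n. \<forall>i. Ca $ i \<ge> 0}"
      unfolding convex_def by (auto intro!: add_nonneg_nonneg mult_nonneg_nonneg)
  next
    fix s :: real and x y :: "real^'n"
    assume s: "0 < s" "s < 1"
    define z where "z = (1 - s) *\<^sub>R x + s *\<^sub>R y"
    have Cz: "(\<Sum>i\<in>UNIV. z $ i) = (1 - s) * (\<Sum>i\<in>UNIV. x $ i) + s * (\<Sum>i\<in>UNIV. y $ i)"
      unfolding z_def by (simp add: sum.distrib sum_distrib_left)
    have pw: "f z t \<omega> \<le> (1 - s) * f x t \<omega> + s * f y t \<omega>" if t: "t \<in> {1..T}" for t \<omega>
    proof -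
      define gx where "gx = P_out a X Y x t \<omega>"
      define gy where "gy = P_out a X Y y t \<omega>"
      define gz where "gz = P_out a X Y z t \<omega>"
      define Pi where "Pi = P_in a X Y t \<omega>"
      define cx where "cx = (\<Sum>i\<in>UNIV. x $ i)"
      define cy where "cy = (\<Sum>i\<in>UNIV. y $ i)"
      define b where "b = \<beta> t"
      have G: "(1 - s) * gx + s * gy \<le> gz"
        unfolding gx_def gy_def gz_def P_out_def z_def
        using s by (simp add: sum_distrib_left sum.distrib[symmetric])
          (intro sum_mono min_conc, auto)
      have "f z t \<omega> = \<pi>in * Pi + (- \<pi>out * gz + \<pi>grid * max (gz - (Pi + b * ((1 - s) * cx + s * cy))) 0
          + \<pi>rev * max ((Pi - (1 - b) * ((1 - s) * cx + s * cy)) - gz) 0)"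
        unfolding f_def gz_def Pi_def b_def Cz cx_def[symmetric] cy_def[symmetric] by (simp add: algebra_simps)
      also have "\<dots> \<le> \<pi>in * Pi + (- \<pi>out * ((1 - s) * gx + s * gy) + \<pi>grid * max (((1 - s) * gx + s * gy) - (Pi + b * ((1 - s) * cx + s * cy))) 0
          + \<pi>rev * max ((Pi - (1 - b) * ((1 - s) * cx + s * cy)) - ((1 - s) * gx + s * gy)) 0)"
        using F_mono[OF G assms(6,7,8), of "Pi + b * ((1 - s) * cx + s * cy)" "Pi - (1 - b) * ((1 - s) * cx + s * cy)"]
        by linarith
      also have "\<dots> = \<pi>in * Pi - \<pi>out * ((1 - s) * gx + s * gy)
          + \<pi>grid * max ((1 - s) * (gx - Pi - b * cx) + s * (gy - Pi - b * cy)) 0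
          + \<pi>rev * max ((1 - s) * (Pi - gx - (1 - b) * cx) + s * (Pi - gy - (1 - b) * cy)) 0"
        by (simp add: algebra_simps)
      also have "\<dots> \<le> \<pi>in * Pi - \<pi>out * ((1 - s) * gx + s * gy)
          + \<pi>grid * ((1 - s) * max (gx - Pi - b * cx) 0 + s * max (gy - Pi - b * cy) 0)
          + \<pi>rev * ((1 - s) * max (Pi - gx - (1 - b) * cx) 0 + s * max (Pi - gy - (1 - b) * cy) 0)"
        using s assms(6,7)
        by (intro add_mono mult_left_mono max0_conv order_refl) auto
      also have "\<dots> = (1 - s) * f x t \<omega> + s * f y t \<omega>"
        unfolding f_def gx_def gy_def Pi_def cx_def cy_def b_def by (simp add: algebra_simps)
      finally show ?thesis .
    qed
    have "(\<Sum>t=1..T. integral\<^sup>L M (f z t)) \<le> (\<Sum>t=1..T. integral\<^sup>L M (\<lambda>\<omega>. (1 - s) * f x t \<omega> + s * f y t \<omega>))"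
      using pw intf by (intro sum_mono integral_mono) auto
    also have "\<dots> = (1 - s) * (\<Sum>t=1..T. integral\<^sup>L M (f x t)) + s * (\<Sum>t=1..T. integral\<^sup>L M (f y t))"
      using intf by (simp add: sum_distrib_left sum.distrib[symmetric])
    finally show "J_a M T a X Y \<beta> \<pi>B \<pi>in \<pi>out \<pi>grid \<pi>rev ((1 - s) *\<^sub>R x + s *\<^sub>R y)
      \<le> (1 - s) * J_a M T a X Y \<beta> \<pi>B \<pi>in \<pi>out \<pi>grid \<pi>rev x + s * J_a M T a X Y \<beta> \<pi>B \<pi>in \<pi>out \<pi>grid \<pi>rev y"
      unfolding J z_def[symmetric] Cz by (simp add: algebra_simps)
  qed
qed

end
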